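(* Let $X$ be an infinite set, $k>0$ an integer, and $\{(x^0_n,\dots,x^{k-1}_n):n\in\omega\}$ a sequence in $([X]^{<\omega})^k$. Then there exist: elements $d_0,\dots,d_{k-1}\in[X]^{<\omega}$; a strictly increasing sequence $(n_l)_{l\in\omega}$ in $\omega$; an integer $t$ with $0\le t\le k$ and a sequence $\{(y^0_{n_l},\dots,y^{t-1}_{n_l}):l\in\omega\}$ in $([X]^{<\omega})^t$; and for each $0\le s<k$ a function $P_s:t\to 2$, such that (i) $x^s_{n_l}=\Big(\sum_{i=0}^{t-1}P_s(i)\,y^i_{n_l}\Big)\triangle d_s$ for every $l\in\omega$ and $0\le s<k$ (where for $t=0$ this reads $x^s_{n_l}=d_s$); (ii) the family $\{y^i_{n_l}: l\in\omega,\ 0\le i<t\}$ is linearly independent.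
   Context: $[X]^{<\omega}$ is the set of finite subsets of $X$, regarded as a vector space over the field $2=\{0,1\}$ with symmetric difference $\triangle$ as addition; sums $\sum P(i)y^i$ are taken in this vector space. Linear independence is over $2$, for the indexed family (so members are pairwise distinct). *)

theory Defs
  imports Main
begin

text \<open>Symmetric difference: addition in the vector space of finite subsets over the field 2.\<close>
definition symdiff :: "'a set \<Rightarrow> 'a set \<Rightarrow> 'a set" where
  "symdiff A B = (A - B) \<union> (B - A)"

definition sd_sum :: "('i \<Rightarrow> 'a set) \<Rightarrow> 'i set \<Rightarrow> 'a set" where
  "sd_sum f I = Finite_Set.fold (\<lambda>i acc. symdiff acc (f i)) {} I"

definition gf2_lin_indep :: "('i \<Rightarrow> 'a set) \<Rightarrow> 'i set \<Rightarrow> bool" where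
  "gf2_lin_indep f I \<longleftrightarrow> inj_on f I \<and>
     (\<forall>F. F \<subseteq> I \<and> finite F \<and> F \<noteq> {} \<longrightarrow> sd_sum f F \<noteq> {})"

end

theory Submission imports Defs begin

lemma symdiff_comm: "symdiff A B = symdiff B A" by (auto simp: symdiff_def)
lemma symdiff_assoc: "symdiff (symdiff A B) C = symdiff A (symdiff B C)" by (auto simp: symdiff_def)
lemma symdiff_empty_iff: "symdiff A B = {} \<longleftrightarrow> A = B" by (auto simp: symdiff_def)
lemma symdiff_self[simp]: "symdiff A A = {}" by (auto simp: symdiff_def)
lemma symdiff_empty[simp]: "symdiff A {} = A" "symdiff {} A = A" by (auto simp: symdiff_def)

interpretation SD: comm_monoid_set symdiff "{}"
  by unfold_locales (auto simp: symdiff_def)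

lemma sd_sum_SD: "sd_sum f A = SD.F f A"
  unfolding sd_sum_def SD.eq_fold
  by (rule arg_cong[where f="\<lambda>h. Finite_Set.fold h {} A"]) (auto simp: fun_eq_iff symdiff_comm)

lemma sd_sum_symdiff:
  assumes "finite C" "finite D"
  shows "sd_sum f (symdiff C D) = symdiff (sd_sum f C) (sd_sum f D)"
proof -
  have C: "C = (C - D) \<union> (C \<inter> D)" and D: "D = (D - C) \<union> (C \<inter> D)" by auto
  have e: "symdiff C D = (C - D) \<union> (D - C)" by (simp add: symdiff_def)
  have "SD.F f C = symdiff (SD.F f (C - D)) (SD.F f (C \<inter> D))"
    by (subst C, rule SD.union_disjoint) (use assms in auto)
  moreover have "SD.F f D = symdiff (SD.F f (D - C)) (SD.F f (C \<inter> D))"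
    by (subst D, rule SD.union_disjoint) (use assms in auto)
  moreover have "SD.F f (symdiff C D) = symdiff (SD.F f (C - D)) (SD.F f (D - C))"
    unfolding e by (rule SD.union_disjoint) (use assms in auto)
  ultimately show ?thesis unfolding sd_sum_SD
    by (simp add: symdiff_assoc) (metis symdiff_assoc symdiff_comm symdiff_self symdiff_empty(1))
qed

lemma sd_sum_closed:
  assumes "\<And>i. i \<in> A \<Longrightarrow> finite (f i) \<and> f i \<subseteq> X"
  shows "finite (sd_sum f A) \<and> sd_sum f A \<subseteq> X"
proof (cases "finite A")
  case True
  then show ?thesis using assms unfolding sd_sum_SD
    by (induction A rule: finite_induct) (auto simp: symdiff_def)
qed (simp add: sd_sum_SD)


theorem mainTheorem3:
  fixes X :: "'a set" and k :: nat and x :: "nat \<Rightarrow> nat \<Rightarrow> 'a set"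
  assumes "infinite X" and "k > 0"
    and "\<And>n s. s < k \<Longrightarrow> finite (x n s) \<and> x n s \<subseteq> X"
  shows "\<exists>(d :: nat \<Rightarrow> 'a set) (nl :: nat \<Rightarrow> nat) (t :: nat) (y :: nat \<Rightarrow> nat \<Rightarrow> 'a set)
            (P :: nat \<Rightarrow> nat \<Rightarrow> bool).
     (\<forall>s<k. finite (d s) \<and> d s \<subseteq> X) \<and>
     strict_mono nl \<and>
     t \<le> k \<and>
     (\<forall>l i. i < t \<longrightarrow> finite (y l i) \<and> y l i \<subseteq> X) \<and>
     (\<forall>l s. s < k \<longrightarrow>
        x (nl l) s = symdiff (sd_sum (\<lambda>i. if P s i then y l i else {}) {..<t}) (d s)) \<and>
     gf2_lin_indep (\<lambda>(l, i). y l i) (UNIV \<times> {..<t})"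
proof -
  define z where "z C n = sd_sum (x n) C" for C n
  define K where "K N = {C. C \<subseteq> {..<k} \<and> (\<exists>v. \<forall>n\<in>N. z C n = v)}" for N :: "nat set"
  have Kfin: "finite (K N)" for N
    by (rule finite_subset[of _ "Pow {..<k}"]) (auto simp: K_def)
  have Kmono: "M \<subseteq> N \<Longrightarrow> K N \<subseteq> K M" for M N unfolding K_def by blast
  have Kbd: "card (K N) \<le> 2^k" for N
  proof -
    have "card (K N) \<le> card (Pow {..<k::nat})" by (rule card_mono) (auto simp: K_def)
    thus ?thesis by (simp add: card_Pow)
  qed
  obtain N where Ninf: "infinite N" and Nmax: "\<And>M. infinite M \<Longrightarrow> card (K M) \<le> card (K N)"
    using Lattices_Big.ex_has_greatest_nat[of "\<lambda>N::nat set. infinite N" UNIV "\<lambda>N. card (K N)" "2^k+1"] Kbd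
    by (metis infinite_UNIV_nat less_Suc_eq_le Suc_eq_plus1)
  have fto: "finite {n\<in>N. z C n \<in> A}" if "C \<subseteq> {..<k}" "C \<notin> K N" "finite A" for C A
  proof -
    have "finite {n\<in>N. z C n = v}" for v
    proof (rule ccontr)
      assume inf: "infinite {n\<in>N. z C n = v}"
      let ?M = "{n\<in>N. z C n = v}"
      have "C \<in> K ?M" using that(1) by (auto simp: K_def)
      moreover have "K N \<subseteq> K ?M" by (rule Kmono) auto
      ultimately have "K N \<subset> K ?M" using that(2) by blast
      then have "card (K N) < card (K ?M)" by (rule psubset_card_mono[OF Kfin])
      with Nmax[OF inf] show False by simp
    qed
    moreover have "{n\<in>N. z C n \<in> A} = (\<Union>v\<in>A. {n\<in>N. z C n = v})" by auto
    ultimately show ?thesis using that(3) by simp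
  qed
  have zcl: "finite (z C n) \<and> z C n \<subseteq> X" if "C \<subseteq> {..<k}" for C n
    unfolding z_def by (intro sd_sum_closed assms(3)) (use that in auto)
  have zsd: "z (symdiff C D) n = symdiff (z C n) (z D n)" if "finite C" "finite D" for C D n
    unfolding z_def using that by (rule sd_sum_symdiff)
  have zs: "z {s} n = x n s" for s n by (simp add: z_def sd_sum_SD)
  define Good where "Good S \<longleftrightarrow> S \<subseteq> {..<k} \<and> (\<forall>T. T \<subseteq> S \<and> T \<noteq> {} \<longrightarrow> T \<notin> K N)" for S
  have G0: "Good {}" by (simp add: Good_def)
  have Gbd: "card S \<le> k" if "Good S" for S
  proof -
    have "card S \<le> card {..<k}" using that by (intro card_mono) (auto simp: Good_def)
    thus ?thesis by simp
  qed
  obtain S where GS: "Good S" and Smax: "\<And>S'. Good S' \<Longrightarrow> card S' \<le> card S"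
    using Lattices_Big.ex_has_greatest_nat[of Good "{}" card "k+1"] G0 Gbd
    by (metis less_Suc_eq_le Suc_eq_plus1)
  have Sk: "S \<subseteq> {..<k}" using GS by (simp add: Good_def)
  have finS: "finite S" using Sk finite_subset by blast
  have rep: "\<exists>T. T \<subseteq> S \<and> symdiff {s} T \<in> K N" if sk: "s < k" for s
  proof (cases "s \<in> S")
    case True
    then show ?thesis using sk by (intro exI[of _ "{s}"]) (auto simp: K_def z_def sd_sum_SD)
  next
    case False
    have "\<not> Good (insert s S)"
    proof
      assume "Good (insert s S)"
      from Smax[OF this] have "card (insert s S) \<le> card S" .
      with False finS show False by simp
    qed
    then obtain T' where T': "T' \<subseteq> insert s S" "T' \<noteq> {}" "T' \<in> K N"
      using Sk sk by (auto simp: Good_def)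
    have "s \<in> T'"
    proof (rule ccontr)
      assume "s \<notin> T'"
      then have "T' \<subseteq> S" using T' by auto
      then show False using T' GS by (auto simp: Good_def)
    qed
    then have "symdiff {s} (T' - {s}) = T'" by (auto simp: symdiff_def)
    then show ?thesis using T' by (intro exI[of _ "T' - {s}"]) auto
  qed
  have "\<forall>s. \<exists>T v. s < k \<longrightarrow> T \<subseteq> S \<and> (\<forall>n\<in>N. z (symdiff {s} T) n = v)"
  proof
    fix s
    show "\<exists>T v. s < k \<longrightarrow> T \<subseteq> S \<and> (\<forall>n\<in>N. z (symdiff {s} T) n = v)"
    proof (cases "s < k")
      case True
      from rep[OF True] obtain T where T: "T \<subseteq> S" "symdiff {s} T \<in> K N" by blast
      from T(2) obtain v where "\<forall>n\<in>N. z (symdiff {s} T) n = v" unfolding K_def by blast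
      with T(1) show ?thesis by blast
    qed simp
  qed
  from choice[OF this] obtain Tf where "\<forall>s. \<exists>v. s < k \<longrightarrow> Tf s \<subseteq> S \<and> (\<forall>n\<in>N. z (symdiff {s} (Tf s)) n = v)"
    by blast
  from choice[OF this] obtain dv where Tfdv0: "\<forall>s. s < k \<longrightarrow> Tf s \<subseteq> S \<and> (\<forall>n\<in>N. z (symdiff {s} (Tf s)) n = dv s)"
    by blast
  have Tfdv: "Tf s \<subseteq> S \<and> (\<forall>n\<in>N. z (symdiff {s} (Tf s)) n = dv s)" if "s < k" for s
    using Tfdv0 that by blast
  have dec: "x n s = symdiff (z (Tf s) n) (dv s)" if "s < k" "n \<in> N" for s n
  proof -
    have fT: "finite (Tf s)" using Tfdv[OF that(1)] finS finite_subset by blast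
    have "dv s = symdiff (x n s) (z (Tf s) n)"
      using Tfdv[OF that(1)] that(2) zsd[of "{s}" "Tf s" n] fT zs by simp
    then show ?thesis by (auto simp: symdiff_def)
  qed
  obtain n0 where n0: "n0 \<in> N" using Ninf by (metis finite.emptyI ex_in_conv)
  have dcl: "finite (dv s) \<and> dv s \<subseteq> X" if "s < k" for s
  proof -
    have "dv s = z (symdiff {s} (Tf s)) n0" using Tfdv[OF that] n0 by simp
    moreover have "symdiff {s} (Tf s) \<subseteq> {..<k}" using Tfdv[OF that] Sk that by (auto simp: symdiff_def)
    ultimately show ?thesis using zcl by simp
  qed
  define Sp where "Sp m = (\<lambda>G. sd_sum (\<lambda>(j,s). x j s) G) ` Pow ({..m} \<times> S)" for m
  have Spfin: "finite (Sp m)" for m using finS by (simp add: Sp_def)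
  define good where "good m n \<longleftrightarrow> n \<in> N \<and> m < n \<and> (\<forall>T. T \<subseteq> S \<and> T \<noteq> {} \<longrightarrow> z T n \<notin> Sp m)" for m n
  have ex_good: "\<exists>n. good m n" for m
  proof -
    define B where "B = (\<Union>T\<in>{T. T \<subseteq> S \<and> T \<noteq> {}}. {n\<in>N. z T n \<in> Sp m})"
    have "finite B" unfolding B_def
    proof (rule finite_UN_I)
      show "finite {T. T \<subseteq> S \<and> T \<noteq> {}}" using finS by simp
      fix T assume "T \<in> {T. T \<subseteq> S \<and> T \<noteq> {}}"
      then show "finite {n\<in>N. z T n \<in> Sp m}" using GS Sk by (intro fto Spfin) (auto simp: Good_def)
    qed
    then have "infinite (N - B - {..m})" using Ninf by (metis finite_Diff2 finite_atMost)
    then obtain n where "n \<in> N - B - {..m}" by (metis finite.emptyI ex_in_conv)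
    then have "good m n" unfolding good_def B_def by auto
    then show ?thesis by blast
  qed
  define g where "g m = (SOME n. good m n)" for m
  have gg: "good m (g m)" for m using someI_ex[OF ex_good] g_def by simp
  define nl where "nl l = (g ^^ Suc l) 0" for l
  have gup: "m < g m" for m using gg by (simp add: good_def)
  have iter_mono: "(g ^^ a) 0 \<le> (g ^^ (a + c)) 0" for a c
  proof (induction c)
    case (Suc c)
    thus ?case using gup[of "(g ^^ (a + c)) 0"] by simp
  qed simp
  have smono: "strict_mono nl" unfolding strict_mono_Suc_iff nl_def using gup by simp
  have nlN: "nl l \<in> N" for l using gg by (simp add: nl_def good_def)
  define sl where "sl = sorted_list_of_set S"
  define t where "t = length sl"
  have dsl: "distinct sl" and ssl: "set sl = S" using finS by (auto simp: sl_def)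
  have tk: "t \<le> k"
  proof -
    have "t = card S" using dsl ssl by (simp add: t_def distinct_card[symmetric])
    thus ?thesis using Gbd[OF GS] by simp
  qed
  define y where "y l i = x (nl l) (sl ! i)" for l i
  define P where "P s i \<longleftrightarrow> sl ! i \<in> Tf s" for s i
  have sumT: "sd_sum (\<lambda>i. if sl ! i \<in> T then y l i else {}) {..<t} = z T (nl l)" if "T \<subseteq> S" for T l
  proof -
    have "sd_sum (\<lambda>i. if sl ! i \<in> T then y l i else {}) {..<t} = sd_sum (y l) {i\<in>{..<t}. sl ! i \<in> T}"
      unfolding sd_sum_SD by (rule SD.inter_filter[symmetric]) simp
    also have "\<dots> = sd_sum (x (nl l)) ((!) sl ` {i\<in>{..<t}. sl ! i \<in> T})"
      unfolding sd_sum_SD by (subst SD.reindex) (auto intro!: inj_on_nth dsl simp: t_def y_def comp_def)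
    also have "(!) sl ` {i\<in>{..<t}. sl ! i \<in> T} = T" using that ssl
      by (force simp: t_def in_set_conv_nth image_iff)
    finally show ?thesis by (simp add: z_def)
  qed
  define Y where "Y = (\<lambda>(l, i). y l i)"
  have indep: "sd_sum Y F \<noteq> {}" if FF: "F \<subseteq> UNIV \<times> {..<t}" "finite F" "F \<noteq> {}" for F
  proof
    assume sum0: "sd_sum Y F = {}"
    define L where "L = Max (fst ` F)"
    define F1 where "F1 = {p\<in>F. fst p < L}"
    define I2 where "I2 = {i. (L,i) \<in> F}"
    have LF: "\<forall>p\<in>F. fst p \<le> L" using FF by (auto simp: L_def)
    have FU: "F = F1 \<union> (\<lambda>i. (L,i)) ` I2" using LF by (force simp: F1_def I2_def)
    have "L \<in> fst ` F" using FF unfolding L_def by (intro Max_in) auto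
    then have I2ne: "I2 \<noteq> {}" by (force simp: I2_def)
    have I2t: "I2 \<subseteq> {..<t}" using FF(1) by (auto simp: I2_def)
    have fin1: "finite F1" using FF(2) by (simp add: F1_def)
    have fin2: "finite I2" using I2t finite_subset by blast
    define m where "m = (g ^^ L) 0"
    have nlL: "nl L = g m" by (simp add: nl_def m_def)
    define T where "T = (!) sl ` I2"
    have TS: "T \<subseteq> S" "T \<noteq> {}" using I2t I2ne ssl by (auto simp: T_def t_def)
    have "sd_sum Y ((\<lambda>i. (L,i)) ` I2) = sd_sum (\<lambda>i. x (nl L) (sl ! i)) I2"
      unfolding sd_sum_SD by (subst SD.reindex) (auto simp: inj_on_def y_def Y_def comp_def)
    also have "\<dots> = z T (nl L)"
      unfolding sd_sum_SD z_def T_def using I2t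
      by (subst SD.reindex) (auto intro!: inj_on_nth simp: dsl comp_def t_def)
    finally have B: "sd_sum Y ((\<lambda>i. (L,i)) ` I2) = z T (nl L)" .
    have Bnot: "z T (nl L) \<notin> Sp m" using gg[of m] TS unfolding nlL good_def by auto
    have A: "sd_sum Y F1 \<in> Sp m"
    proof -
      define h where "h = (\<lambda>(j::nat,i::nat). (nl j, sl ! i))"
      have inj: "inj_on h F1"
      proof (rule inj_onI)
        fix a b assume a: "a \<in> F1" and b: "b \<in> F1" and e: "h a = h b"
        obtain j i where aa: "a = (j,i)" by fastforce
        obtain j' i' where bb: "b = (j',i')" by fastforce
        have "nl j = nl j'" "sl ! i = sl ! i'" using e by (auto simp: h_def aa bb)
        moreover have "i < length sl" "i' < length sl" using a b FF(1) by (auto simp: aa bb F1_def t_def)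
        ultimately show "a = b" using smono dsl by (auto simp: aa bb strict_mono_eq nth_eq_iff_index_eq)
      qed
      have "sd_sum Y F1 = sd_sum (\<lambda>(j,s). x j s) (h ` F1)"
        unfolding sd_sum_SD by (subst SD.reindex[OF inj]) (auto intro!: SD.cong simp: h_def y_def Y_def)
      moreover have "h ` F1 \<subseteq> {..m} \<times> S"
      proof
        fix q assume "q \<in> h ` F1"
        then obtain j i where ji: "(j,i) \<in> F1" and q: "q = (nl j, sl ! i)" by (auto simp: h_def)
        have "j < L" "i < t" using ji FF(1) by (auto simp: F1_def)
        have "nl j \<le> m"
          using iter_mono[of "Suc j" "L - Suc j"] \<open>j < L\<close> by (simp add: nl_def m_def)
        moreover have "sl ! i \<in> S" using \<open>i < t\<close> ssl by (auto simp: t_def)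
        ultimately show "q \<in> {..m} \<times> S" using q by simp
      qed
      ultimately show ?thesis unfolding Sp_def by blast
    qed
    have "sd_sum Y F = symdiff (sd_sum Y F1) (sd_sum Y ((\<lambda>i. (L,i)) ` I2))"
      unfolding sd_sum_SD by (subst FU, rule SD.union_disjoint) (use fin1 fin2 in \<open>auto simp: F1_def\<close>)
    then have "sd_sum Y F1 = z T (nl L)" using sum0 B symdiff_empty_iff by metis
    with A Bnot show False by simp
  qed
  have inj: "inj_on Y (UNIV \<times> {..<t})"
  proof (rule inj_onI)
    fix a b assume a: "a \<in> UNIV \<times> {..<t}" and b: "b \<in> UNIV \<times> {..<t}" and eq: "Y a = Y b"
    show "a = b"
    proof (rule ccontr)
      assume "a \<noteq> b"
      then have "sd_sum Y {a,b} = symdiff (Y a) (Y b)" by (simp add: sd_sum_SD)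
      with eq have "sd_sum Y {a,b} = {}" by simp
      with indep[of "{a,b}"] a b show False by auto
    qed
  qed
  have c1: "\<forall>s<k. finite (dv s) \<and> dv s \<subseteq> X" using dcl by blast
  have c4: "\<forall>l i. i < t \<longrightarrow> finite (y l i) \<and> y l i \<subseteq> X"
  proof (intro allI impI)
    fix l i assume "i < t"
    then have "sl ! i \<in> S" using ssl by (auto simp: t_def)
    then show "finite (y l i) \<and> y l i \<subseteq> X" using Sk assms(3) by (auto simp: y_def)
  qed
  have c5: "\<forall>l s. s < k \<longrightarrow>
        x (nl l) s = symdiff (sd_sum (\<lambda>i. if P s i then y l i else {}) {..<t}) (dv s)"
    using dec nlN sumT Tfdv unfolding P_def by simp
  have c6: "gf2_lin_indep (\<lambda>(l, i). y l i) (UNIV \<times> {..<t})"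
    unfolding gf2_lin_indep_def Y_def[symmetric] using inj indep by blast
  show ?thesis
    apply (rule exI[of _ dv], rule exI[of _ nl], rule exI[of _ t], rule exI[of _ y], rule exI[of _ P])
    using c1 smono tk c4 c5 c6 by blast
qed

end
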